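(* On the set of irreducible transition matrices on the finite set $S$ that are reversible with respect to $\pi$, efficiency dominance is a partial order: (a) every such $P$ efficiency-dominates itself; (b) if $P$ efficiency-dominates $Q$ and $Q$ efficiency-dominates $P$, then $P=Q$; (c) if $P$ efficiency-dominates $Q$ and $Q$ efficiency-dominates $R$, then $P$ efficiency-dominates $R$.
   Context: $S$ is a finite set, and $\pi$ is a probability distribution on $S$ with $\pi(x)>0$ for all $x$. A transition matrix $P$ is reversible with respect to $\pi$ if $\pi(x)P(x,y)=\pi(y)P(y,x)$ for all $x,y$; irreducible if every state can be reached from every other with positive probability in some number of steps. For a Markov chain $X_1,X_2,\dots$ with transition matrix $P$ and $X_1\sim\pi$, $v(f,P)=\lim_{N\to\infty}\frac1N\mathrm{Var}\big(\sum_{i=1}^N f(X_i)\big)$. $P$ efficiency-dominates $Q$ if $v(f,P)\le v(f,Q)$ for all $f:S\to\mathbb R$. *)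

theory Defs
  imports Complex_Main
begin

text \<open>States: a finite type 'a (the finite set S is UNIV). Matrices are functions 'a => 'a => real.\<close>

definition transition_matrix :: "('a::finite \<Rightarrow> 'a \<Rightarrow> real) \<Rightarrow> bool" where
  "transition_matrix P \<longleftrightarrow> (\<forall>x y. 0 \<le> P x y) \<and> (\<forall>x. (\<Sum>y\<in>UNIV. P x y) = 1)"

definition reversible :: "('a::finite \<Rightarrow> real) \<Rightarrow> ('a \<Rightarrow> 'a \<Rightarrow> real) \<Rightarrow> bool" where
  "reversible \<pi> P \<longleftrightarrow> (\<forall>x y. \<pi> x * P x y = \<pi> y * P y x)"

fun mat_pow :: "('a::finite \<Rightarrow> 'a \<Rightarrow> real) \<Rightarrow> nat \<Rightarrow> 'a \<Rightarrow> 'a \<Rightarrow> real" where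
  "mat_pow P 0 = (\<lambda>x y. if x = y then 1 else 0)"
| "mat_pow P (Suc n) = (\<lambda>x y. \<Sum>z\<in>UNIV. mat_pow P n x z * P z y)"

definition irreducible_chain :: "('a::finite \<Rightarrow> 'a \<Rightarrow> real) \<Rightarrow> bool" where
  "irreducible_chain P \<longleftrightarrow> (\<forall>x y. \<exists>n. mat_pow P n x y > 0)"

fun path_prob_from :: "('a \<Rightarrow> 'a \<Rightarrow> real) \<Rightarrow> 'a \<Rightarrow> 'a list \<Rightarrow> real" where
  "path_prob_from P x [] = 1"
| "path_prob_from P x (y # ys) = P x y * path_prob_from P y ys"

text \<open>P(X_1 = x_1, ..., X_N = x_N) for the chain with X_1 ~ pi.\<close>
fun path_prob :: "('a \<Rightarrow> real) \<Rightarrow> ('a \<Rightarrow> 'a \<Rightarrow> real) \<Rightarrow> 'a list \<Rightarrow> real" where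
  "path_prob \<pi> P [] = 1"
| "path_prob \<pi> P (x # xs) = \<pi> x * path_prob_from P x xs"

text \<open>Var(sum_{i=1}^N f(X_i)), computed over the (finite) law of (X_1,...,X_N).\<close>
definition chain_sum_var ::
  "('a::finite \<Rightarrow> real) \<Rightarrow> ('a \<Rightarrow> 'a \<Rightarrow> real) \<Rightarrow> ('a \<Rightarrow> real) \<Rightarrow> nat \<Rightarrow> real" where
  "chain_sum_var \<pi> P f N =
     (let paths = {xs :: 'a list. length xs = N};
          m = (\<Sum>xs\<in>paths. path_prob \<pi> P xs * sum_list (map f xs))
      in (\<Sum>xs\<in>paths. path_prob \<pi> P xs * (sum_list (map f xs) - m)\<^sup>2))"

definition asym_var :: "('a::finite \<Rightarrow> real) \<Rightarrow> ('a \<Rightarrow> real) \<Rightarrow> ('a \<Rightarrow> 'a \<Rightarrow> real) \<Rightarrow> real" where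
  "asym_var \<pi> f P = lim (\<lambda>N. chain_sum_var \<pi> P f N / real N)"

definition eff_dominates ::
  "('a::finite \<Rightarrow> real) \<Rightarrow> ('a \<Rightarrow> 'a \<Rightarrow> real) \<Rightarrow> ('a \<Rightarrow> 'a \<Rightarrow> real) \<Rightarrow> bool" where
  "eff_dominates \<pi> P Q \<longleftrightarrow> (\<forall>f :: 'a \<Rightarrow> real. asym_var \<pi> f P \<le> asym_var \<pi> f Q)"

end

theory Submission imports Defs "HOL-Analysis.Analysis" begin

definition Pm :: "('a::finite \<Rightarrow> 'a \<Rightarrow> real) \<Rightarrow> ('a \<Rightarrow> real) \<Rightarrow> 'a \<Rightarrow> real" where
  "Pm P u = (\<lambda>x. \<Sum>y\<in>UNIV. P x y * u y)"

definition Ex :: "('a::finite \<Rightarrow> real) \<Rightarrow> ('a \<Rightarrow> real) \<Rightarrow> real" where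
  "Ex \<pi> u = (\<Sum>x\<in>UNIV. \<pi> x * u x)"

fun pit :: "('a::finite \<Rightarrow> 'a \<Rightarrow> real) \<Rightarrow> nat \<Rightarrow> ('a \<Rightarrow> real) \<Rightarrow> 'a \<Rightarrow> real" where
  "pit P 0 u = u"
| "pit P (Suc k) u = Pm P (pit P k u)"

lemma Pm_diff: "Pm P (\<lambda>y. u y - v y) x = Pm P u x - Pm P v x"
  by (simp add: Pm_def sum_subtractf right_diff_distrib)

lemma Pm_add: "Pm P (\<lambda>y. u y + v y) x = Pm P u x + Pm P v x"
  by (simp add: Pm_def sum.distrib distrib_left)

lemma Pm_const: "transition_matrix P \<Longrightarrow> Pm P (\<lambda>_. c) x = c"
  by (simp add: Pm_def transition_matrix_def sum_distrib_right[symmetric])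

lemma Pm_bound:
  assumes "transition_matrix P" "\<And>y. \<bar>v y\<bar> \<le> B"
  shows "\<bar>Pm P v x\<bar> \<le> B"
proof -
  have "\<bar>Pm P v x\<bar> \<le> (\<Sum>y\<in>UNIV. \<bar>P x y * v y\<bar>)" unfolding Pm_def by (rule sum_abs)
  also have "\<dots> \<le> (\<Sum>y\<in>UNIV. P x y * B)"
    apply (rule sum_mono)
    using assms unfolding transition_matrix_def by (simp add: abs_mult mult_left_mono)
  also have "\<dots> = B" using assms(1) unfolding transition_matrix_def by (simp add: sum_distrib_right[symmetric])
  finally show ?thesis .
qed

lemma pit_bound:
  assumes "transition_matrix P" "\<And>y. \<bar>v y\<bar> \<le> B"
  shows "\<bar>pit P k v x\<bar> \<le> B"
  using assms by (induction k arbitrary: x) (auto intro: Pm_bound)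

lemma pit_diff: "pit P k (\<lambda>y. u y - v y) = (\<lambda>x. pit P k u x - pit P k v x)"
  by (induction k) (auto simp: Pm_diff[symmetric])

lemma pit_Pm: "pit P k (Pm P u) = pit P (Suc k) u"
  by (induction k) auto

lemma stationary:
  assumes "reversible \<pi> P" "transition_matrix P"
  shows "Ex \<pi> (Pm P u) = Ex \<pi> u"
proof -
  have r: "\<And>x y. \<pi> x * P x y = \<pi> y * P y x" using assms(1) by (simp add: reversible_def)
  have "Ex \<pi> (Pm P u) = (\<Sum>x\<in>UNIV. \<Sum>y\<in>UNIV. \<pi> x * P x y * u y)"
    by (simp add: Ex_def Pm_def sum_distrib_left mult.assoc)
  also have "\<dots> = (\<Sum>x\<in>UNIV. \<Sum>y\<in>UNIV. \<pi> y * P y x * u y)" by (simp add: r)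
  also have "\<dots> = (\<Sum>y\<in>UNIV. \<Sum>x\<in>UNIV. \<pi> y * P y x * u y)" by (rule sum.swap)
  also have "\<dots> = (\<Sum>y\<in>UNIV. \<pi> y * u y * (\<Sum>x\<in>UNIV. P y x))"
    by (simp add: sum_distrib_left algebra_simps)
  also have "\<dots> = Ex \<pi> u" using assms(2) by (simp add: Ex_def transition_matrix_def)
  finally show ?thesis .
qed

lemma symm:
  assumes "reversible \<pi> P"
  shows "Ex \<pi> (\<lambda>x. Pm P a x * b x) = Ex \<pi> (\<lambda>x. a x * Pm P b x)"
proof -
  have r: "\<And>x y. \<pi> x * P x y = \<pi> y * P y x" using assms(1) by (simp add: reversible_def)
  have "Ex \<pi> (\<lambda>x. Pm P a x * b x) = (\<Sum>x\<in>UNIV. \<Sum>y\<in>UNIV. (\<pi> x * P x y) * a y * b x)"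
    by (simp add: Ex_def Pm_def sum_distrib_left sum_distrib_right algebra_simps)
  also have "\<dots> = (\<Sum>x\<in>UNIV. \<Sum>y\<in>UNIV. (\<pi> y * P y x) * a y * b x)" by (simp add: r)
  also have "\<dots> = (\<Sum>y\<in>UNIV. \<Sum>x\<in>UNIV. (\<pi> y * P y x) * a y * b x)" by (rule sum.swap)
  also have "\<dots> = Ex \<pi> (\<lambda>x. a x * Pm P b x)"
    by (simp add: Ex_def Pm_def sum_distrib_left sum_distrib_right algebra_simps)
  finally show ?thesis .
qed

lemma sum_lists_Suc:
  "(\<Sum>xs\<in>{xs::'a::finite list. length xs = Suc n}. F xs) = (\<Sum>y\<in>UNIV. \<Sum>ys\<in>{ys. length ys = n}. F (y#ys))"
proof -
  have e: "{xs::'a list. length xs = Suc n} = (\<lambda>(y,ys). y#ys) ` (UNIV \<times> {ys. length ys = n})"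
    by (auto simp: length_Suc_conv image_iff)
  have i: "inj_on (\<lambda>(y::'a,ys). y#ys) (UNIV \<times> {ys. length ys = n})"
    by (auto simp: inj_on_def)
  show ?thesis unfolding e sum.reindex[OF i] sum.cartesian_product
    by (simp add: comp_def split_def)
qed

abbreviation L :: "nat \<Rightarrow> 'a list set" where "L n \<equiv> {xs. length xs = n}"

definition pw :: "('a::finite \<Rightarrow> 'a \<Rightarrow> real) \<Rightarrow> nat \<Rightarrow> 'a \<Rightarrow> real" where
  "pw P n x = (\<Sum>ys\<in>L n. path_prob_from P x ys)"
definition pa :: "('a::finite \<Rightarrow> 'a \<Rightarrow> real) \<Rightarrow> ('a \<Rightarrow> real) \<Rightarrow> nat \<Rightarrow> 'a \<Rightarrow> real" where
  "pa P f n x = (\<Sum>ys\<in>L n. path_prob_from P x ys * sum_list (map f ys))"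
definition pb :: "('a::finite \<Rightarrow> 'a \<Rightarrow> real) \<Rightarrow> ('a \<Rightarrow> real) \<Rightarrow> nat \<Rightarrow> 'a \<Rightarrow> real" where
  "pb P f n x = (\<Sum>ys\<in>L n. path_prob_from P x ys * (sum_list (map f ys))\<^sup>2)"

lemma L0: "L 0 = {[]}" by auto

lemma pw1: "transition_matrix P \<Longrightarrow> pw P n x = 1"
proof (induction n arbitrary: x)
  case 0 then show ?case by (simp add: pw_def L0)
next
  case (Suc n)
  have "pw P (Suc n) x = (\<Sum>y\<in>UNIV. P x y * pw P n y)"
    by (simp add: pw_def sum_lists_Suc sum_distrib_left)
  also have "\<dots> = 1" using Suc by (simp add: transition_matrix_def)
  finally show ?case .
qed

lemma pa0: "pa P f 0 x = 0" by (simp add: pa_def L0)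
lemma pb0: "pb P f 0 x = 0" by (simp add: pb_def L0)

lemma pa_Suc: assumes "transition_matrix P"
  shows "pa P f (Suc n) x = Pm P (\<lambda>y. f y + pa P f n y) x"
proof -
  have "\<And>y. (\<Sum>ys\<in>L n. P x y * path_prob_from P y ys * (f y + sum_list (map f ys)))
      = P x y * (f y * pw P n y + pa P f n y)"
    by (simp add: pw_def pa_def sum_distrib_left sum.distrib algebra_simps)
  then show ?thesis using pw1[OF assms]
    by (simp add: pa_def Pm_def sum_lists_Suc mult.assoc)
qed

lemma pb_Suc: assumes "transition_matrix P"
  shows "pb P f (Suc n) x = Pm P (\<lambda>y. (f y)\<^sup>2 + 2 * f y * pa P f n y + pb P f n y) x"
proof -
  have "\<And>y. (\<Sum>ys\<in>L n. P x y * path_prob_from P y ys * (f y + sum_list (map f ys))\<^sup>2)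
      = P x y * ((f y)\<^sup>2 * pw P n y + 2 * f y * pa P f n y + pb P f n y)"
    by (simp add: pw_def pa_def pb_def sum_distrib_left sum.distrib power2_eq_square algebra_simps)
  then show ?thesis using pw1[OF assms]
    by (simp add: pb_def Pm_def sum_lists_Suc mult.assoc)
qed

lemma Ex_add: "Ex \<pi> (\<lambda>x. u x + v x) = Ex \<pi> u + Ex \<pi> v"
  by (simp add: Ex_def sum.distrib distrib_left)
lemma Ex_diff: "Ex \<pi> (\<lambda>x. u x - v x) = Ex \<pi> u - Ex \<pi> v"
  by (simp add: Ex_def sum_subtractf right_diff_distrib)
lemma Ex_cmult: "Ex \<pi> (\<lambda>x. c * u x) = c * Ex \<pi> u"
  by (simp add: Ex_def sum_distrib_left algebra_simps)

lemma Ex_pa: assumes "transition_matrix P" "reversible \<pi> P" "Ex \<pi> f = 0"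
  shows "Ex \<pi> (pa P f n) = 0"
proof (induction n)
  case 0 then show ?case by (simp add: pa0 Ex_def)
next
  case (Suc n)
  have "pa P f (Suc n) = Pm P (\<lambda>y. f y + pa P f n y)"
    using pa_Suc[OF assms(1)] by (intro ext) auto
  then show ?case using stationary[OF assms(2,1)] Suc assms(3) by (simp add: Ex_add)
qed

lemma csv:
  assumes "transition_matrix P" "reversible \<pi> P" "Ex \<pi> f = 0"
  shows "chain_sum_var \<pi> P f N = Ex \<pi> (pb P f N)"
proof (cases N)
  case 0 then show ?thesis by (simp add: chain_sum_var_def L0 pb0 Ex_def)
next
  case (Suc n)
  have m: "(\<Sum>xs\<in>L N. path_prob \<pi> P xs * sum_list (map f xs)) = 0"
  proof -
    have "\<And>y. (\<Sum>ys\<in>L n. \<pi> y * path_prob_from P y ys * (f y + sum_list (map f ys)))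
       = \<pi> y * (f y * pw P n y + pa P f n y)"
      by (simp add: pw_def pa_def sum_distrib_left sum.distrib algebra_simps)
    then have "(\<Sum>xs\<in>L N. path_prob \<pi> P xs * sum_list (map f xs)) = Ex \<pi> (\<lambda>y. f y + pa P f n y)"
      using pw1[OF assms(1)] by (simp add: Suc sum_lists_Suc Ex_def mult.assoc)
    also have "\<dots> = 0" using Ex_pa[OF assms] assms(3) by (simp add: Ex_add)
    finally show ?thesis .
  qed
  have "\<And>y. (\<Sum>ys\<in>L n. \<pi> y * path_prob_from P y ys * (f y + sum_list (map f ys))\<^sup>2)
      = \<pi> y * ((f y)\<^sup>2 * pw P n y + 2 * f y * pa P f n y + pb P f n y)"
    by (simp add: pw_def pa_def pb_def sum_distrib_left sum.distrib power2_eq_square algebra_simps)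
  then have "chain_sum_var \<pi> P f N = Ex \<pi> (\<lambda>y. (f y)\<^sup>2 + 2 * f y * pa P f n y + pb P f n y)"
    using pw1[OF assms(1)] m unfolding chain_sum_var_def Let_def
    by (simp add: Suc sum_lists_Suc Ex_def mult.assoc)
  also have "\<dots> = Ex \<pi> (Pm P (\<lambda>y. (f y)\<^sup>2 + 2 * f y * pa P f n y + pb P f n y))"
    using stationary[OF assms(2,1)] by simp
  also have "\<dots> = Ex \<pi> (pb P f N)"
    using pb_Suc[OF assms(1)] Suc by (simp add: Ex_def)
  finally show ?thesis .
qed

lemma Ex_pb:
  assumes "transition_matrix P" "reversible \<pi> P"
  shows "Ex \<pi> (pb P f N) = real N * Ex \<pi> (\<lambda>x. (f x)\<^sup>2) + 2 * (\<Sum>k<N. Ex \<pi> (\<lambda>x. f x * pa P f k x))"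
proof (induction N)
  case 0 then show ?case by (simp add: pb0 Ex_def)
next
  case (Suc n)
  have "pb P f (Suc n) = Pm P (\<lambda>y. (f y)\<^sup>2 + 2 * f y * pa P f n y + pb P f n y)"
    using pb_Suc[OF assms(1)] by (intro ext) auto
  then have "Ex \<pi> (pb P f (Suc n)) = Ex \<pi> (\<lambda>y. (f y)\<^sup>2 + 2 * (f y * pa P f n y) + pb P f n y)"
    using stationary[OF assms(2,1)] by (simp add: mult.assoc)
  also have "\<dots> = Ex \<pi> (\<lambda>y. (f y)\<^sup>2) + 2 * Ex \<pi> (\<lambda>y. f y * pa P f n y) + Ex \<pi> (pb P f n)"
    by (simp add: Ex_add Ex_cmult)
  finally show ?case using Suc by (simp add: algebra_simps)
qed

lemma pa_h:
  assumes "transition_matrix P" "\<And>x. h x - Pm P h x = f x"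
  shows "pa P f k x = Pm P h x - pit P (Suc k) h x"
proof (induction k arbitrary: x)
  case 0 then show ?case by (simp add: pa0)
next
  case (Suc k)
  have "pa P f (Suc k) x = Pm P (\<lambda>y. f y + pa P f k y) x" by (rule pa_Suc[OF assms(1)])
  also have "(\<lambda>y. f y + pa P f k y) = (\<lambda>y. h y - pit P (Suc k) h y)"
    using Suc assms(2) by (intro ext) (metis add_diff_eq diff_add_cancel)
  finally show ?case by (simp add: Pm_diff)
qed

lemma max_principle:
  assumes T: "transition_matrix P" and I: "irreducible_chain P" and H: "\<And>x. Pm P h x = h x"
  shows "h x = h y"
proof -
  have "Max (range h) \<in> range h" by (rule Max_in) auto
  then obtain x0 where e0: "h x0 = Max (range h)" by (metis imageE)
  have x0: "\<And>z. h z \<le> h x0" unfolding e0 by (rule Max_ge) auto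
  have nn: "\<And>x y. 0 \<le> P x y" using T by (simp add: transition_matrix_def)
  have rs: "\<And>x. (\<Sum>y\<in>UNIV. P x y) = 1" using T by (simp add: transition_matrix_def)
  have step: "h y = h x0" if "h x = h x0" "P x y > 0" for x y
  proof (rule ccontr)
    assume "h y \<noteq> h x0"
    then have lt: "h y < h x0" using x0 by (simp add: order_less_le)
    have "(\<Sum>z\<in>UNIV. P x z * h z) < (\<Sum>z\<in>UNIV. P x z * h x0)"
    proof (rule sum_strict_mono_ex1)
      show "\<forall>z\<in>UNIV. P x z * h z \<le> P x z * h x0" using nn x0 by (auto intro: mult_left_mono)
      show "\<exists>a\<in>UNIV. P x a * h a < P x a * h x0" using lt that(2) mult_strict_left_mono by blast
    qed simp
    also have "\<dots> = h x0" using rs by (simp add: sum_distrib_right[symmetric])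
    finally show False using H[of x] that(1) by (simp add: Pm_def)
  qed
  have mpnn: "\<And>n x y. 0 \<le> mat_pow P n x y"
  proof -
    fix n show "\<And>x y. 0 \<le> mat_pow P n x y"
      by (induction n) (auto intro!: sum_nonneg simp: nn)
  qed
  have all: "h y = h x0" if "mat_pow P n x0 y > 0" for n y
    using that
  proof (induction n arbitrary: y)
    case 0 then show ?case by (auto split: if_splits)
  next
    case (Suc n)
    then have "0 < (\<Sum>z\<in>UNIV. mat_pow P n x0 z * P z y)" by simp
    then obtain z where z: "0 < mat_pow P n x0 z * P z y"
      by (metis (no_types, lifting) not_le sum_nonpos)
    then have "0 < mat_pow P n x0 z" "0 < P z y"
      using mpnn[of n x0 z] nn[of z y] by (auto simp: zero_less_mult_iff)
    then show ?case using Suc.IH step by blast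
  qed
  obtain n1 where "mat_pow P n1 x0 x > 0" using I by (auto simp: irreducible_chain_def)
  obtain n2 where "mat_pow P n2 x0 y > 0" using I by (auto simp: irreducible_chain_def)
  then show ?thesis using all \<open>mat_pow P n1 x0 x > 0\<close> by metis
qed

lemma Ex_const: "Ex \<pi> (\<lambda>x. c) = c * (\<Sum>x\<in>UNIV. \<pi> x)"
  by (simp add: Ex_def sum_distrib_left mult.commute)

lemma poisson_exists:
  fixes \<pi> :: "'a::finite \<Rightarrow> real"
  assumes T: "transition_matrix P" and I: "irreducible_chain P" and R: "reversible \<pi> P"
    and S: "(\<Sum>x\<in>UNIV. \<pi> x) = 1" and G: "Ex \<pi> g = 0"
  shows "\<exists>h. (\<forall>x. h x - Pm P h x = g x) \<and> Ex \<pi> h = 0"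
proof -
  define A :: "real^'a^'a" where "A = (\<chi> x y. (if x = y then 1 else 0) - P x y + \<pi> y)"
  have Av: "(A *v v)$x = v$x - Pm P (\<lambda>y. v$y) x + Ex \<pi> (\<lambda>y. v$y)" for v x
  proof -
    have "(A *v v)$x = (\<Sum>j\<in>UNIV. (if x = j then v$j else 0) - P x j * v$j + \<pi> j * v$j)"
      unfolding A_def matrix_vector_mult_def by (auto intro!: sum.cong simp: algebra_simps)
    also have "\<dots> = v$x - Pm P (\<lambda>y. v$y) x + Ex \<pi> (\<lambda>y. v$y)"
      by (simp add: sum.distrib sum_subtractf Pm_def Ex_def)
    finally show ?thesis .
  qed
  have key: "Ex \<pi> (\<lambda>x. k x - Pm P k x + Ex \<pi> k) = Ex \<pi> k" for k
    using stationary[OF R T, of k] S by (simp add: Ex_add Ex_diff Ex_const)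
  have ker: "v = 0" if "A *v v = 0" for v
  proof -
    define k where "k = (\<lambda>y. v$y)"
    have e: "\<And>x. k x - Pm P k x + Ex \<pi> k = 0" using that Av unfolding k_def
      by (metis vec_lambda_beta zero_index)
    then have "Ex \<pi> k = 0" using key[of k] by (simp add: Ex_def)
    then have "\<And>x. Pm P k x = k x" using e by (metis add.right_neutral eq_iff_diff_eq_0)
    then have c: "\<And>x y. k x = k y" using max_principle[OF T I] by blast
    have "\<And>x. Ex \<pi> k = k x" proof -
      fix x have "Ex \<pi> k = Ex \<pi> (\<lambda>_. k x)" unfolding Ex_def using c by metis
      then show "Ex \<pi> k = k x" using S by (simp add: Ex_const)
    qed
    then show ?thesis using \<open>Ex \<pi> k = 0\<close> unfolding k_def by (simp add: vec_eq_iff)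
  qed
  have inj: "inj (\<lambda>v. A *v v)"
    by (rule injI) (metis eq_iff_diff_eq_0 ker matrix_vector_mult_diff_distrib)
  have "surj ((*v) A)"
    using inj full_rank_injective[of A] full_rank_surjective[of A] by metis
  then obtain v where v: "(\<chi> x. g x) = A *v v" by (rule surjE)
  define h where "h = (\<lambda>y. v$y)"
  have e: "h x - Pm P h x + Ex \<pi> h = g x" for x
  proof -
    have "(A *v v)$x = g x" by (simp add: v[symmetric])
    then show ?thesis using Av[of v x] unfolding h_def by simp
  qed
  have "(\<lambda>x. h x - Pm P h x + Ex \<pi> h) = g" by (rule ext) (rule e)
  then have "Ex \<pi> h = Ex \<pi> g" using key[of h] by simp
  then show ?thesis using e G by auto
qed

lemma asym_formula:
  fixes \<pi> :: "'a::finite \<Rightarrow> real"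
  assumes T: "transition_matrix P" and I: "irreducible_chain P" and R: "reversible \<pi> P"
    and S: "(\<Sum>x\<in>UNIV. \<pi> x) = 1" and pos: "\<forall>x. \<pi> x > 0"
    and F: "Ex \<pi> f = 0" and H: "\<And>x. h x - Pm P h x = f x" and H0: "Ex \<pi> h = 0"
  shows "asym_var \<pi> f P = 2 * Ex \<pi> (\<lambda>x. f x * h x) - Ex \<pi> (\<lambda>x. (f x)\<^sup>2)"
proof -
  obtain u where U: "\<And>x. u x - Pm P u x = h x"
    using poisson_exists[OF T I R S H0] by blast
  define d where "d k = Ex \<pi> (\<lambda>x. f x * pit P (Suc k) u x)" for k
  have hu: "h = (\<lambda>y. u y - Pm P u y)" using U by (intro ext) simp
  have pit_h: "pit P (Suc k) h x = pit P (Suc k) u x - pit P (Suc (Suc k)) u x" for k x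
    unfolding hu pit_diff pit_Pm by simp
  have c: "Ex \<pi> (\<lambda>x. f x * pa P f k x) = Ex \<pi> (\<lambda>x. f x * Pm P h x) - (d k - d (Suc k))" for k
  proof -
    have "Ex \<pi> (\<lambda>x. f x * pa P f k x) = Ex \<pi> (\<lambda>x. f x * Pm P h x - (f x * pit P (Suc k) u x - f x * pit P (Suc (Suc k)) u x))"
      unfolding pa_h[OF T H] pit_h by (simp add: algebra_simps)
    then show ?thesis by (simp add: Ex_diff d_def)
  qed
  define C where "C = Ex \<pi> (\<lambda>x. (f x)\<^sup>2) + 2 * Ex \<pi> (\<lambda>x. f x * Pm P h x)"
  have V: "chain_sum_var \<pi> P f N = real N * C - 2 * (d 0 - d N)" for N
  proof -
    have "chain_sum_var \<pi> P f N = real N * Ex \<pi> (\<lambda>x. (f x)\<^sup>2) + 2 * (\<Sum>k<N. Ex \<pi> (\<lambda>x. f x * Pm P h x) - (d k - d (Suc k)))"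
      using csv[OF T R F] Ex_pb[OF T R] c by simp
    also have "\<dots> = real N * C - 2 * (d 0 - d N)"
    proof -
      have "(\<Sum>k<N. Ex \<pi> (\<lambda>x. f x * Pm P h x) - (d k - d (Suc k)))
          = real N * Ex \<pi> (\<lambda>x. f x * Pm P h x) - (d 0 - d N)"
        using sum_lessThan_telescope[of d N] by (simp add: sum_subtractf)
      then show ?thesis by (simp add: C_def algebra_simps)
    qed
    finally show ?thesis .
  qed
  define B where "B = (\<Sum>x\<in>UNIV. \<bar>u x\<bar>)"
  have uB: "\<bar>u y\<bar> \<le> B" for y unfolding B_def by (rule member_le_sum) auto
  define D where "D = (\<Sum>x\<in>UNIV. \<pi> x * \<bar>f x\<bar> * B)"
  have dD: "\<bar>d k\<bar> \<le> D" for k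
  proof -
    have "\<bar>d k\<bar> \<le> (\<Sum>x\<in>UNIV. \<bar>\<pi> x * (f x * pit P (Suc k) u x)\<bar>)"
      unfolding d_def Ex_def by (rule sum_abs)
    also have "\<dots> \<le> D" unfolding D_def
    proof (rule sum_mono)
      fix x
      have "\<bar>pit P (Suc k) u x\<bar> \<le> B" by (rule pit_bound[OF T uB])
      then have "\<bar>f x\<bar> * \<bar>pit P (Suc k) u x\<bar> \<le> \<bar>f x\<bar> * B" by (simp add: mult_left_mono)
      then have "\<pi> x * (\<bar>f x\<bar> * \<bar>pit P (Suc k) u x\<bar>) \<le> \<pi> x * (\<bar>f x\<bar> * B)"
        using pos by (simp add: mult_left_mono less_imp_le)
      then show "\<bar>\<pi> x * (f x * pit P (Suc k) u x)\<bar> \<le> \<pi> x * \<bar>f x\<bar> * B"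
        using pos by (simp add: abs_mult less_imp_le mult.assoc)
    qed
    finally show ?thesis .
  qed
  have z: "(\<lambda>N. (d 0 - d N) / real N) \<longlonglongrightarrow> 0"
  proof (rule Lim_null_comparison)
    show "\<forall>\<^sub>F N in sequentially. norm ((d 0 - d N) / real N) \<le> (\<bar>d 0\<bar> + D) / real N"
    proof (rule always_eventually, rule allI)
      fix N
      have "\<bar>d 0 - d N\<bar> \<le> \<bar>d 0\<bar> + D" using dD[of N] by linarith
      then show "norm ((d 0 - d N) / real N) \<le> (\<bar>d 0\<bar> + D) / real N"
        by (simp add: divide_right_mono)
    qed
    show "(\<lambda>N. (\<bar>d 0\<bar> + D) / real N) \<longlonglongrightarrow> 0" by (rule lim_const_over_n)
  qed
  have "(\<lambda>N. C - 2 * ((d 0 - d N) / real N)) \<longlonglongrightarrow> C - 2 * 0"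
    by (intro tendsto_intros z)
  then have lim1: "(\<lambda>N. C - 2 * ((d 0 - d N) / real N)) \<longlonglongrightarrow> C" by simp
  have "(\<lambda>N. chain_sum_var \<pi> P f N / real N) \<longlonglongrightarrow> C"
  proof (rule Lim_transform_eventually[OF lim1])
    show "\<forall>\<^sub>F N in sequentially. C - 2 * ((d 0 - d N) / real N) = chain_sum_var \<pi> P f N / real N"
      unfolding eventually_sequentially
      by (rule exI[of _ 1]) (auto simp: V field_simps)
  qed
  then have "asym_var \<pi> f P = C" unfolding asym_var_def by (rule limI)
  moreover have "Ex \<pi> (\<lambda>x. f x * Pm P h x) = Ex \<pi> (\<lambda>x. f x * h x) - Ex \<pi> (\<lambda>x. (f x)\<^sup>2)"
  proof -
    have e: "Pm P h x = h x - f x" for x using H[of x] by linarith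
    have "(\<lambda>x. f x * Pm P h x) = (\<lambda>x. f x * h x - (f x)\<^sup>2)"
      by (intro ext) (simp only: e right_diff_distrib power2_eq_square)
    then show ?thesis by (simp add: Ex_diff)
  qed
  ultimately show ?thesis by (simp add: C_def)
qed

lemma Ex_sq_zero:
  assumes pos: "\<forall>x. \<pi> x > 0" and e: "Ex \<pi> (\<lambda>x. r x * r x) = 0"
  shows "r x = 0"
proof -
  have "\<forall>x\<in>UNIV. \<pi> x * (r x * r x) = 0"
    using e unfolding Ex_def
    by (subst sum_nonneg_eq_0_iff[symmetric]) (auto intro!: mult_nonneg_nonneg simp: less_imp_le pos)
  then have "\<pi> x * (r x * r x) = 0" by simp
  then show ?thesis using pos[rule_format, of x] by simp
qed

lemma antisym_core:
  fixes \<pi> :: "'a::finite \<Rightarrow> real"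
  assumes S: "(\<Sum>x\<in>UNIV. \<pi> x) = 1" and pos: "\<forall>x. \<pi> x > 0"
    and TP: "transition_matrix P" and IP: "irreducible_chain P" and RP: "reversible \<pi> P"
    and TQ: "transition_matrix Q" and IQ: "irreducible_chain Q" and RQ: "reversible \<pi> Q"
    and eqv: "\<And>f. asym_var \<pi> f P = asym_var \<pi> f Q"
    and U: "Ex \<pi> u = 0"
  shows "Pm P u x = Pm Q u x"
proof -
  define g where "g = (\<lambda>x. u x - Pm P u x)"
  have G: "Ex \<pi> g = 0" unfolding g_def using U stationary[OF RP TP] by (simp add: Ex_diff)
  obtain k where K: "\<And>x. k x - Pm Q k x = g x" and K0: "Ex \<pi> k = 0"
    using poisson_exists[OF TQ IQ RQ S G] by blast
  define r where "r = (\<lambda>x. u x - k x)"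
  have R0: "Ex \<pi> r = 0" unfolding r_def using U K0 by (simp add: Ex_diff)
  obtain a where A: "\<And>x. a x - Pm P a x = r x" and A0: "Ex \<pi> a = 0"
    using poisson_exists[OF TP IP RP S R0] by blast
  obtain b where B: "\<And>x. b x - Pm Q b x = r x" and B0: "Ex \<pi> b = 0"
    using poisson_exists[OF TQ IQ RQ S R0] by blast
  have GU: "\<And>x. u x - Pm P u x = g x" unfolding g_def by simp
  have GR: "Ex \<pi> (\<lambda>x. g x + r x) = 0" using G R0 by (simp add: Ex_add)
  have UA: "\<And>x. (u x + a x) - Pm P (\<lambda>y. u y + a y) x = g x + r x"
    using GU A Pm_add[of P u a] by (metis add_diff_add)
  have KB: "\<And>x. (k x + b x) - Pm Q (\<lambda>y. k y + b y) x = g x + r x"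
    using K B Pm_add[of Q k b] by (metis add_diff_add)
  have UA0: "Ex \<pi> (\<lambda>x. u x + a x) = 0" using U A0 by (simp add: Ex_add)
  have KB0: "Ex \<pi> (\<lambda>x. k x + b x) = 0" using K0 B0 by (simp add: Ex_add)
  note fP = asym_formula[OF TP IP RP S pos]
  note fQ = asym_formula[OF TQ IQ RQ S pos]
  have e1: "2 * Ex \<pi> (\<lambda>x. g x * u x) - Ex \<pi> (\<lambda>x. (g x)\<^sup>2) = 2 * Ex \<pi> (\<lambda>x. g x * k x) - Ex \<pi> (\<lambda>x. (g x)\<^sup>2)"
    using fP[OF G GU U] fQ[OF G K K0] eqv[of g] by simp
  have e2: "2 * Ex \<pi> (\<lambda>x. r x * a x) - Ex \<pi> (\<lambda>x. (r x)\<^sup>2) = 2 * Ex \<pi> (\<lambda>x. r x * b x) - Ex \<pi> (\<lambda>x. (r x)\<^sup>2)"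
    using fP[OF R0 A A0] fQ[OF R0 B B0] eqv[of r] by simp
  have e3: "2 * Ex \<pi> (\<lambda>x. (g x + r x) * (u x + a x)) - Ex \<pi> (\<lambda>x. (g x + r x)\<^sup>2)
     = 2 * Ex \<pi> (\<lambda>x. (g x + r x) * (k x + b x)) - Ex \<pi> (\<lambda>x. (g x + r x)\<^sup>2)"
    using fP[OF GR UA UA0] fQ[OF GR KB KB0] eqv[of "\<lambda>x. g x + r x"] by simp
  have x1: "Ex \<pi> (\<lambda>x. (g x + r x) * (u x + a x)) = Ex \<pi> (\<lambda>x. g x * u x) + Ex \<pi> (\<lambda>x. g x * a x)
      + Ex \<pi> (\<lambda>x. r x * u x) + Ex \<pi> (\<lambda>x. r x * a x)"
    by (simp add: Ex_def sum.distrib algebra_simps)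
  have x2: "Ex \<pi> (\<lambda>x. (g x + r x) * (k x + b x)) = Ex \<pi> (\<lambda>x. g x * k x) + Ex \<pi> (\<lambda>x. g x * b x)
      + Ex \<pi> (\<lambda>x. r x * k x) + Ex \<pi> (\<lambda>x. r x * b x)"
    by (simp add: Ex_def sum.distrib algebra_simps)
  have s1: "Ex \<pi> (\<lambda>x. g x * a x) = Ex \<pi> (\<lambda>x. r x * u x)"
  proof -
    have "Ex \<pi> (\<lambda>x. g x * a x) = Ex \<pi> (\<lambda>x. u x * a x) - Ex \<pi> (\<lambda>x. Pm P u x * a x)"
      unfolding g_def by (simp add: Ex_diff[symmetric] algebra_simps)
    also have "\<dots> = Ex \<pi> (\<lambda>x. u x * a x) - Ex \<pi> (\<lambda>x. u x * Pm P a x)" using symm[OF RP] by simp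
    also have "\<dots> = Ex \<pi> (\<lambda>x. u x * (a x - Pm P a x))" by (simp add: Ex_diff[symmetric] algebra_simps)
    also have "\<dots> = Ex \<pi> (\<lambda>x. r x * u x)" using A by (simp add: mult.commute)
    finally show ?thesis .
  qed
  have s2: "Ex \<pi> (\<lambda>x. g x * b x) = Ex \<pi> (\<lambda>x. r x * k x)"
  proof -
    have gk: "g = (\<lambda>x. k x - Pm Q k x)" using K by (intro ext) simp
    have "Ex \<pi> (\<lambda>x. g x * b x) = Ex \<pi> (\<lambda>x. k x * b x) - Ex \<pi> (\<lambda>x. Pm Q k x * b x)"
      unfolding gk by (simp add: Ex_diff[symmetric] algebra_simps)
    also have "\<dots> = Ex \<pi> (\<lambda>x. k x * b x) - Ex \<pi> (\<lambda>x. k x * Pm Q b x)" using symm[OF RQ] by simp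
    also have "\<dots> = Ex \<pi> (\<lambda>x. k x * (b x - Pm Q b x))" by (simp add: Ex_diff[symmetric] algebra_simps)
    also have "\<dots> = Ex \<pi> (\<lambda>x. r x * k x)" using B by (simp add: mult.commute)
    finally show ?thesis .
  qed
  have "Ex \<pi> (\<lambda>x. r x * u x) = Ex \<pi> (\<lambda>x. r x * k x)"
    using e1 e2 e3 x1 x2 s1 s2 by linarith
  moreover have "Ex \<pi> (\<lambda>x. r x * r x) = Ex \<pi> (\<lambda>x. r x * u x) - Ex \<pi> (\<lambda>x. r x * k x)"
    unfolding Ex_diff[symmetric] r_def by (simp add: algebra_simps)
  ultimately have "Ex \<pi> (\<lambda>x. r x * r x) = 0" by simp
  then have "\<And>x. r x = 0" using Ex_sq_zero[OF pos] by blast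
  then have uk: "\<And>x. u x = k x" unfolding r_def by (metis eq_iff_diff_eq_0)
  then have "u = k" by (rule ext)
  then show ?thesis using GU[of x] K[of x] by simp
qed

lemma mat_eq:
  fixes \<pi> :: "'a::finite \<Rightarrow> real"
  assumes S: "(\<Sum>x\<in>UNIV. \<pi> x) = 1" and TP: "transition_matrix P" and TQ: "transition_matrix Q"
    and H: "\<And>u x. Ex \<pi> u = 0 \<Longrightarrow> Pm P u x = Pm Q u x"
  shows "P = Q"
proof (intro ext)
  fix x y :: 'a
  define w where "w = (\<lambda>z. if z = y then 1 else (0::real))"
  have "Ex \<pi> (\<lambda>z. w z - Ex \<pi> w) = 0" using S by (simp add: Ex_diff Ex_const)
  then have "Pm P (\<lambda>z. w z - Ex \<pi> w) x = Pm Q (\<lambda>z. w z - Ex \<pi> w) x" by (rule H)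
  then have "Pm P w x = Pm Q w x" by (simp add: Pm_diff Pm_const TP TQ)
  moreover have "\<And>R. Pm R w x = R x y"
  proof -
    fix R :: "'a \<Rightarrow> 'a \<Rightarrow> real"
    have eq: "(\<lambda>z. R x z * w z) = (\<lambda>z. if z = y then R x z else 0)" unfolding w_def by auto
    show "Pm R w x = R x y" unfolding Pm_def eq by simp
  qed
  ultimately show "P x y = Q x y" by simp
qed

theorem theorem3:
  fixes \<pi> :: "'a::finite \<Rightarrow> real"
  assumes pos: "\<forall>x. \<pi> x > 0"
    and sum1: "(\<Sum>x\<in>UNIV. \<pi> x) = 1"
  defines "M \<equiv> {P. transition_matrix P \<and> irreducible_chain P \<and> reversible \<pi> P}"
  shows "(\<forall>P\<in>M. eff_dominates \<pi> P P)
    \<and> (\<forall>P\<in>M. \<forall>Q\<in>M. eff_dominates \<pi> P Q \<and> eff_dominates \<pi> Q P \<longrightarrow> P = Q)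
    \<and> (\<forall>P\<in>M. \<forall>Q\<in>M. \<forall>R\<in>M. eff_dominates \<pi> P Q \<and> eff_dominates \<pi> Q R \<longrightarrow> eff_dominates \<pi> P R)"
proof (intro conjI ballI impI)
  fix P assume "P \<in> M" then show "eff_dominates \<pi> P P" by (simp add: eff_dominates_def)
next
  fix P Q assume PM: "P \<in> M" and QM: "Q \<in> M" and d: "eff_dominates \<pi> P Q \<and> eff_dominates \<pi> Q P"
  then have eqv: "\<And>f. asym_var \<pi> f P = asym_var \<pi> f Q"
    unfolding eff_dominates_def by (meson order_antisym)
  from PM QM have TP: "transition_matrix P" and IP: "irreducible_chain P" and RP: "reversible \<pi> P"
    and TQ: "transition_matrix Q" and IQ: "irreducible_chain Q" and RQ: "reversible \<pi> Q"
    unfolding M_def by auto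
  show "P = Q"
    by (rule mat_eq[OF sum1 TP TQ antisym_core[OF sum1 pos TP IP RP TQ IQ RQ eqv]])
next
  fix P Q R assume "eff_dominates \<pi> P Q \<and> eff_dominates \<pi> Q R"
  then show "eff_dominates \<pi> P R" unfolding eff_dominates_def by (meson order_trans)
qed

end
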